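(* There exist a universal constant $c>0$ and a family of weighted graphs, with arbitrarily large number $n$ of vertices, such that (1) all edge weights equal $1/2$; (2) $\mathsf{OPT}^{\mathsf{IR}}=O(1)$; (3) every persuasive binary signaling scheme has cost at least $c\,n$.
   Context: Setting. $V$ is a finite set of $n$ task types and $W=(W_{u,v})_{u,v\in V}$ is a symmetric matrix with entries in $[0,1]$ and $W_{v,v}=1$; edges are pairs $\{u,v\}$, $u\ne v$, with $W_{u,v}>0$, of weight $W_{u,v}$. A vector $\theta\in\mathbb{R}_{\ge0}^V$ is feasible if $W\theta\ge\mathbf 1$ coordinatewise. $\mathsf{OPT}^{\mathsf{IR}}=\min\{\|\theta\|_1:\theta\in[0,1]^V\text{ feasible}\}$. Signaling. There are $n$ agents; the type profile $t$ is a uniformly random bijection $[n]\to V$. A signaling scheme with finite signal space $\Sigma\subset[0,1]$ is a map $\varphi$ assigning to each bijection $t$ a distribution $\varphi(t)$ on $\Sigma^V$; given $t$, $s\sim\varphi(t)$ is drawn and agent $i$ privately receives $s_{t_i}$. For agent $i$, a signal $\theta\in\Sigma$ with $\Pr[s_{t_i}=\theta]>0$ and $x\ge0$, let $Q_i(x\mid\theta)=\mathbb{E}\big[x+\sum_{v'\neq t_i}W_{t_i,v'}s_{v'}\,\big|\,s_{t_i}=\theta\big]$. The scheme is persuasive if for every agent $i$ and every such $\theta$: $Q_i(\theta\mid\theta)\ge1$ and $\theta=\min\{x\ge0:Q_i(x\mid\theta)\ge1\}$. Its cost is $\mathbb{E}[\|s\|_1]$. Binary means $|\Sigma|=2$.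 *)

theory Defs
  imports "HOL-Probability.Probability" "HOL-Combinatorics.Permutations"
begin

text \<open>Vertex (task type) set V = {..<n}; agents [n] = {..<n}.
  A weight matrix is W :: nat => nat => real, only entries on {..<n} matter.\<close>

definition weighted_graph :: "nat \<Rightarrow> (nat \<Rightarrow> nat \<Rightarrow> real) \<Rightarrow> bool" where
  "weighted_graph n W \<longleftrightarrow>
     (\<forall>u<n. \<forall>v<n. W u v = W v u \<and> 0 \<le> W u v \<and> W u v \<le> 1) \<and> (\<forall>v<n. W v v = 1)"

definition half_edge_weights :: "nat \<Rightarrow> (nat \<Rightarrow> nat \<Rightarrow> real) \<Rightarrow> bool" where
  "half_edge_weights n W \<longleftrightarrow> (\<forall>u<n. \<forall>v<n. u \<noteq> v \<longrightarrow> W u v > 0 \<longrightarrow> W u v = 1/2)"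

definition feasible :: "nat \<Rightarrow> (nat \<Rightarrow> nat \<Rightarrow> real) \<Rightarrow> (nat \<Rightarrow> real) \<Rightarrow> bool" where
  "feasible n W \<theta> \<longleftrightarrow> (\<forall>v<n. \<theta> v \<ge> 0) \<and> (\<forall>u<n. (\<Sum>v<n. W u v * \<theta> v) \<ge> 1)"

definition OPT_IR :: "nat \<Rightarrow> (nat \<Rightarrow> nat \<Rightarrow> real) \<Rightarrow> real" where
  "OPT_IR n W = Inf {(\<Sum>v<n. \<theta> v) | \<theta>. (\<forall>v<n. \<theta> v \<in> {0..1}) \<and> feasible n W \<theta>}"

text \<open>Type profiles: uniformly random bijections [n] -> V, represented canonically
  as permutations of {..<n}.\<close>
definition profiles :: "nat \<Rightarrow> (nat \<Rightarrow> nat) set" where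
  "profiles n = {t. t permutes {..<n}}"

definition signaling_scheme :: "nat \<Rightarrow> real set \<Rightarrow> ((nat \<Rightarrow> nat) \<Rightarrow> (nat \<Rightarrow> real) pmf) \<Rightarrow> bool" where
  "signaling_scheme n Sig \<phi> \<longleftrightarrow> finite Sig \<and> Sig \<subseteq> {0..1} \<and>
     (\<forall>t\<in>profiles n. set_pmf (\<phi> t) \<subseteq> PiE {..<n} (\<lambda>_. Sig))"

definition binary :: "real set \<Rightarrow> bool" where
  "binary Sig \<longleftrightarrow> card Sig = 2"

definition joint :: "nat \<Rightarrow> ((nat \<Rightarrow> nat) \<Rightarrow> (nat \<Rightarrow> real) pmf) \<Rightarrow> ((nat \<Rightarrow> nat) \<times> (nat \<Rightarrow> real)) pmf" where
  "joint n \<phi> = bind_pmf (pmf_of_set (profiles n)) (\<lambda>t. map_pmf (\<lambda>s. (t, s)) (\<phi> t))"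

definition sig_event :: "nat \<Rightarrow> real \<Rightarrow> ((nat \<Rightarrow> nat) \<times> (nat \<Rightarrow> real)) set" where
  "sig_event i th = {(t, s). s (t i) = th}"

text \<open>Q_i(x | th) = E[x + sum_{v' ~= t_i} W_{t_i,v'} s_{v'} | s_{t_i} = th], the conditional
  expectation on an event of positive probability, written as E[X 1_A] / P(A).\<close>
definition Q :: "nat \<Rightarrow> (nat \<Rightarrow> nat \<Rightarrow> real) \<Rightarrow> ((nat \<Rightarrow> nat) \<Rightarrow> (nat \<Rightarrow> real) pmf)
                  \<Rightarrow> nat \<Rightarrow> real \<Rightarrow> real \<Rightarrow> real" where
  "Q n W \<phi> i th x =
     measure_pmf.expectation (joint n \<phi>)
       (\<lambda>(t, s). indicator (sig_event i th) (t, s) *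
                 (x + (\<Sum>v'\<in>{..<n} - {t i}. W (t i) v' * s v')))
     / measure_pmf.prob (joint n \<phi>) (sig_event i th)"

definition persuasive :: "nat \<Rightarrow> (nat \<Rightarrow> nat \<Rightarrow> real) \<Rightarrow> real set
                           \<Rightarrow> ((nat \<Rightarrow> nat) \<Rightarrow> (nat \<Rightarrow> real) pmf) \<Rightarrow> bool" where
  "persuasive n W Sig \<phi> \<longleftrightarrow>
     (\<forall>i<n. \<forall>th\<in>Sig. measure_pmf.prob (joint n \<phi>) (sig_event i th) > 0 \<longrightarrow>
        Q n W \<phi> i th th \<ge> 1 \<and> th = (LEAST x. x \<ge> 0 \<and> Q n W \<phi> i th x \<ge> 1))"

definition cost :: "nat \<Rightarrow> ((nat \<Rightarrow> nat) \<Rightarrow> (nat \<Rightarrow> real) pmf) \<Rightarrow> real" where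
  "cost n \<phi> = measure_pmf.expectation (joint n \<phi>) (\<lambda>(t, s). \<Sum>v<n. \<bar>s v\<bar>)"

end

theory Submission
  imports Defs
begin

definition Wg :: "nat \<Rightarrow> nat \<Rightarrow> real" where
  "Wg u v = (if u = v then 1 else if u < 2 \<or> v < 2 then 1/2
             else if (u-2) div 5 = (v-2) div 5 then 1/2 else 0)"

lemma sum_split5:
  fixes f :: "nat \<Rightarrow> real"
  shows "(\<Sum>v<2+5*M. f v) = f 0 + f 1 + (\<Sum>c<M. \<Sum>j<5. f (2+5*c+j))"
proof -
  have "(\<Sum>v<2+5*M. f v) = f 0 + f 1 + (\<Sum>v<M*5. f (Suc (Suc v)))"
    using sum.lessThan_Suc_shift[of f "Suc (5*M)"] sum.lessThan_Suc_shift[of "\<lambda>i. f (Suc i)" "5*M"]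
    by (simp add: mult.commute)
  also have "(\<Sum>v<M*5. f (Suc (Suc v))) = (\<Sum>c<M. \<Sum>v\<in>{c*5..<c*5+5}. f (Suc (Suc v)))"
    by (rule sum.nat_group[symmetric])
  also have "\<dots> = (\<Sum>c<M. \<Sum>j<5. f (2+5*c+j))"
  proof (rule sum.cong[OF refl])
    fix c
    have "(\<Sum>v\<in>{c*5..<c*5+5}. f (Suc (Suc v))) = (\<Sum>v\<in>{0+c*5..<5+c*5}. f (Suc (Suc v)))"
      by (simp add: add.commute)
    also have "\<dots> = (\<Sum>j\<in>{0..<5}. f (Suc (Suc (j + c*5))))"
      by (rule sum.shift_bounds_nat_ivl)
    also have "\<dots> = (\<Sum>j<5. f (2+5*c+j))"
      by (simp add: atLeast0LessThan algebra_simps)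
    finally show "(\<Sum>v\<in>{c*5..<c*5+5}. f (Suc (Suc v))) = (\<Sum>j<5. f (2+5*c+j))" .
  qed
  finally show ?thesis .
qed

definition TT :: "(nat \<Rightarrow> real) \<Rightarrow> nat \<Rightarrow> real" where
  "TT s c = (\<Sum>j<5. s (2+5*c+j))"

lemma div5: "j < 5 \<Longrightarrow> (2 + 5*c + j - 2) div 5 = (c::nat)"
  by simp

lemma row_hub0:
  "(\<Sum>u<2+5*M. Wg 0 u * s u) = s 0 + s 1 / 2 + (\<Sum>c<M. TT s c) / 2"
  unfolding sum_split5 by (simp add: Wg_def TT_def sum_divide_distrib)

lemma row_hub1:
  "(\<Sum>u<2+5*M. Wg 1 u * s u) = s 0 / 2 + s 1 + (\<Sum>c<M. TT s c) / 2"
  unfolding sum_split5 by (simp add: Wg_def TT_def sum_divide_distrib)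

lemma sum_half_delta:
  fixes p :: "nat \<Rightarrow> real"
  assumes "j0 < 5"
  shows "(\<Sum>j<5. (if j = j0 then 1 else 1/2) * p j) = (\<Sum>j<5. p j) / 2 + p j0 / 2"
proof -
  have "(\<Sum>j<5. (if j = j0 then 1 else 1/2) * p j) = (\<Sum>j<5. p j / 2 + (if j = j0 then p j / 2 else 0))"
    by (intro sum.cong refl) auto
  also have "\<dots> = (\<Sum>j<5. p j) / 2 + p j0 / 2"
    using assms by (simp add: sum.distrib sum_divide_distrib)
  finally show ?thesis .
qed

lemma row_leaf:
  assumes "c0 < M" "j0 < 5"
  shows "(\<Sum>u<2+5*M. Wg (2+5*c0+j0) u * s u) = s 0 / 2 + s 1 / 2 + TT s c0 / 2 + s (2+5*c0+j0) / 2"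
proof -
  have W0: "Wg (2+5*c0+j0) 0 = 1/2" "Wg (2+5*c0+j0) 1 = 1/2" by (simp_all add: Wg_def)
  have Wc: "Wg (2+5*c0+j0) (2+5*c+j) = (if c = c0 then (if j = j0 then 1 else 1/2) else 0)"
    if "j < 5" for c j
    using that assms(2) by (auto simp: Wg_def)
  have "(\<Sum>c<M. \<Sum>j<5. Wg (2+5*c0+j0) (2+5*c+j) * s (2+5*c+j))
        = (\<Sum>c<M. if c = c0 then (\<Sum>j<5. (if j = j0 then 1 else 1/2) * s (2+5*c0+j)) else 0)"
  proof (rule sum.cong[OF refl])
    fix c assume "c \<in> {..<M}"
    show "(\<Sum>j<5. Wg (2+5*c0+j0) (2+5*c+j) * s (2+5*c+j)) =
       (if c = c0 then (\<Sum>j<5. (if j = j0 then 1 else 1/2) * s (2+5*c0+j)) else 0)"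
    proof (cases "c = c0")
      case True
      have "(\<Sum>j<5. Wg (2+5*c0+j0) (2+5*c+j) * s (2+5*c+j)) = (\<Sum>j<5. (if j = j0 then 1 else 1/2) * s (2+5*c0+j))"
      proof (rule sum.cong[OF refl])
        fix j assume "j \<in> {..<5::nat}"
        then have "Wg (2+5*c0+j0) (2+5*c+j) = (if j = j0 then 1 else 1/2)" using Wc[of j c] True by simp
        then show "Wg (2+5*c0+j0) (2+5*c+j) * s (2+5*c+j) = (if j = j0 then 1 else 1/2) * s (2+5*c0+j)"
          using True by (simp only:)
      qed
      then show ?thesis using True by simp
    next
      case False
      have "(\<Sum>j<5. Wg (2+5*c0+j0) (2+5*c+j) * s (2+5*c+j)) = 0"
      proof (rule sum.neutral, rule ballI)
        fix j assume "j \<in> {..<5::nat}"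
        then have "Wg (2+5*c0+j0) (2+5*c+j) = 0" using Wc[of j c] False by simp
        then show "Wg (2+5*c0+j0) (2+5*c+j) * s (2+5*c+j) = 0" by (simp only: mult_zero_left)
      qed
      then show ?thesis using False by simp
    qed
  qed
  also have "\<dots> = (\<Sum>j<5. (if j = j0 then 1 else 1/2) * s (2+5*c0+j))"
    using assms(1) by simp
  also have "\<dots> = TT s c0 / 2 + s (2+5*c0+j0) / 2"
    using sum_half_delta[OF assms(2), of "\<lambda>j. s (2+5*c0+j)"] unfolding TT_def by simp
  finally show ?thesis
    unfolding sum_split5 by (simp add: Wg_def)
qed

definition gg :: "nat \<Rightarrow> (nat \<Rightarrow> real) \<Rightarrow> nat \<Rightarrow> real" where
  "gg n s v = s v + (\<Sum>u\<in>{..<n}-{v}. Wg v u * s u) - 1"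

lemma offsum:
  assumes "v < n"
  shows "(\<Sum>u\<in>{..<n}-{v}. Wg v u * s u) = (\<Sum>u<n. Wg v u * s u) - s v"
proof -
  have "Wg v v = 1" by (simp add: Wg_def)
  then show ?thesis using assms by (simp add: sum_diff1)
qed

lemma gg_hub0: "gg (2+5*M) s 0 = s 0 + s 1 / 2 + (\<Sum>c<M. TT s c) / 2 - 1"
proof -
  have "(\<Sum>u\<in>{..<2+5*M}-{0}. Wg 0 u * s u) = (\<Sum>u<2+5*M. Wg 0 u * s u) - s 0"
    by (rule offsum) simp
  then show ?thesis unfolding gg_def row_hub0 by simp
qed

lemma gg_hub1: "gg (2+5*M) s 1 = s 1 + s 0 / 2 + (\<Sum>c<M. TT s c) / 2 - 1"
proof -
  have "(\<Sum>u\<in>{..<2+5*M}-{1}. Wg 1 u * s u) = (\<Sum>u<2+5*M. Wg 1 u * s u) - s 1"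
    by (rule offsum) simp
  then show ?thesis unfolding gg_def row_hub1 by simp
qed

lemma gg_leaf:
  assumes "c < M" "j < 5"
  shows "gg (2+5*M) s (2+5*c+j) = s (2+5*c+j) / 2 + (s 0 + s 1) / 2 + TT s c / 2 - 1"
proof -
  have "2+5*c+j < 2+5*M" using assms by linarith
  then show ?thesis
  proof -
    have "(\<Sum>u\<in>{..<2+5*M}-{2+5*c+j}. Wg (2+5*c+j) u * s u) = (\<Sum>u<2+5*M. Wg (2+5*c+j) u * s u) - s (2+5*c+j)"
      by (rule offsum) fact
    then show ?thesis unfolding gg_def row_leaf[OF assms] by simp
  qed
qed

definition wt :: "real \<Rightarrow> real \<Rightarrow> real \<Rightarrow> real \<Rightarrow> real" where
  "wt l m b x = (if x = b then l else m)"

definition Fsum :: "real \<Rightarrow> real \<Rightarrow> real \<Rightarrow> real \<Rightarrow> nat \<Rightarrow> (nat \<Rightarrow> real) \<Rightarrow> real" where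
  "Fsum z l m b M s = (\<Sum>v<2+5*M. z * s v - wt l m b (s v) * gg (2+5*M) s v)"

definition H0 :: "real \<Rightarrow> real \<Rightarrow> real \<Rightarrow> real \<Rightarrow> (nat \<Rightarrow> real) \<Rightarrow> real" where
  "H0 z l m b s = z * (s 0 + s 1) - wt l m b (s 0) * (s 0 + s 1 / 2 - 1) - wt l m b (s 1) * (s 1 + s 0 / 2 - 1)"

definition cl :: "real \<Rightarrow> real \<Rightarrow> real \<Rightarrow> real \<Rightarrow> (nat \<Rightarrow> real) \<Rightarrow> nat \<Rightarrow> real" where
  "cl z l m b s c = (\<Sum>j<5. z * s (2+5*c+j) - wt l m b (s (2+5*c+j)) * (s (2+5*c+j) / 2 + (s 0 + s 1) / 2 + TT s c / 2 - 1))
      - (wt l m b (s 0) + wt l m b (s 1)) / 2 * TT s c"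

lemma Fsum_decomp: "Fsum z l m b M s = H0 z l m b s + (\<Sum>c<M. cl z l m b s c)"
proof -
  let ?w = "wt l m b"
  let ?L = "\<Sum>c<M. TT s c"
  have "Fsum z l m b M s = (z * s 0 - ?w (s 0) * gg (2+5*M) s 0) + (z * s 1 - ?w (s 1) * gg (2+5*M) s 1)
     + (\<Sum>c<M. \<Sum>j<5. z * s (2+5*c+j) - ?w (s (2+5*c+j)) * gg (2+5*M) s (2+5*c+j))"
    unfolding Fsum_def by (rule sum_split5)
  also have "(\<Sum>c<M. \<Sum>j<5. z * s (2+5*c+j) - ?w (s (2+5*c+j)) * gg (2+5*M) s (2+5*c+j))
     = (\<Sum>c<M. \<Sum>j<5. z * s (2+5*c+j) - ?w (s (2+5*c+j)) * (s (2+5*c+j) / 2 + (s 0 + s 1) / 2 + TT s c / 2 - 1))"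
    by (intro sum.cong refl) (simp only: lessThan_iff gg_leaf)
  also have "\<dots> = (\<Sum>c<M. cl z l m b s c) + (?w (s 0) + ?w (s 1)) / 2 * ?L"
    unfolding cl_def by (simp add: sum_subtractf sum_distrib_left)
  finally show ?thesis
    unfolding H0_def gg_hub0 gg_hub1 by (simp add: algebra_simps add_divide_distrib)
qed

definition cv :: "real \<Rightarrow> real \<Rightarrow> real \<Rightarrow> real \<Rightarrow> real \<Rightarrow> real \<Rightarrow> real \<Rightarrow> real \<Rightarrow> real" where
  "cv z l m a b y0 y1 k = (let T = k * b + (5 - k) * a; sg = y0 + y1 in
     k * (z * b - l * (b / 2 + sg / 2 + T / 2 - 1)) + (5 - k) * (z * a - m * (a / 2 + sg / 2 + T / 2 - 1))
     - (wt l m b y0 + wt l m b y1) / 2 * T)"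

lemma cv_I:
  assumes "y0 = a \<or> y0 = b" "y1 = a \<or> y1 = b" "a \<noteq> b" "0 \<le> a" "a \<le> 1/20" "0 \<le> b" "b \<le> 6/7"
    and "k = 0 \<or> k = 1 \<or> k = 2 \<or> k = 3 \<or> k = 4 \<or> k = 5"
  shows "cv 1 (1/8) (3/8) a b y0 y1 k \<ge> 1/10"
  using assms by (auto simp: cv_def wt_def Let_def field_simps)

lemma cv_II:
  assumes "y0 = a \<or> y0 = b" "y1 = a \<or> y1 = b" "a \<noteq> b" "0 \<le> a" "a \<le> 1/20" "6/7 \<le> b" "b \<le> 1"
    and "k = 0 \<or> k = 1 \<or> k = 2 \<or> k = 3 \<or> k = 4 \<or> k = 5"
  shows "cv 0 (-3) 1 a b y0 y1 k \<ge> 0"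
  using assms by (auto simp: cv_def wt_def Let_def field_simps)

lemma H0_I:
  assumes "s 0 = a \<or> s 0 = b" "s 1 = a \<or> s 1 = b" "a \<noteq> b" "0 \<le> a" "a \<le> 1/20" "0 \<le> b" "b \<le> 1"
  shows "H0 1 (1/8) (3/8) b s \<ge> -2"
  using assms by (auto simp: H0_def wt_def field_simps)

lemma H0_II:
  assumes "s 0 = a \<or> s 0 = b" "s 1 = a \<or> s 1 = b" "a \<noteq> b" "0 \<le> a" "a \<le> 1/20" "6/7 \<le> b" "b \<le> 1"
  shows "H0 0 (-3) 1 b s \<ge> 1/8"
  using assms by (auto simp: H0_def wt_def field_simps)

lemma count_sum:
  fixes p :: "nat \<Rightarrow> real" and h :: "real \<Rightarrow> real"
  assumes "\<forall>j<5. p j = a \<or> p j = b"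
  shows "(\<Sum>j<5. h (p j)) = real (card {j. j<5 \<and> p j = b}) * h b + (5 - real (card {j. j<5 \<and> p j = b})) * h a"
proof -
  let ?P = "{j. j<5 \<and> p j = b}"
  have "(\<Sum>j<5. h (p j)) = (\<Sum>j<5. if p j = b then h b else h a)"
    using assms by (intro sum.cong refl) auto
  also have "\<dots> = (\<Sum>j\<in>{..<5} \<inter> {j. p j = b}. h b) + (\<Sum>j\<in>{..<5} \<inter> - {j. p j = b}. h a)"
    by (rule sum.If_cases) simp
  also have "{..<5} \<inter> {j. p j = b} = ?P" by auto
  also have "{..<5} \<inter> - {j. p j = b} = {..<5} - ?P" by auto
  also have "card ({..<5::nat} - ?P) = 5 - card ?P"
    by (subst card_Diff_subset) auto
  moreover have "card ?P \<le> 5"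
    using card_mono[of "{..<5::nat}" ?P] by auto
  ultimately show ?thesis by (simp add: of_nat_diff)
qed

lemma cl_eq_cv:
  assumes "\<forall>j<5. s (2+5*c+j) = a \<or> s (2+5*c+j) = b" "a \<noteq> b"
  shows "cl z l m b s c = cv z l m a b (s 0) (s 1) (real (card {j. j<5 \<and> s (2+5*c+j) = b}))"
proof -
  let ?k = "real (card {j. j<5 \<and> s (2+5*c+j) = b})"
  have T: "TT s c = ?k * b + (5 - ?k) * a"
    unfolding TT_def using count_sum[OF assms(1), of "\<lambda>x. x"] by simp
  have wa: "wt l m b a = m" and wb: "wt l m b b = l" using assms(2) by (auto simp: wt_def)
  have "(\<Sum>j<5. z * s (2+5*c+j) - wt l m b (s (2+5*c+j)) * (s (2+5*c+j) / 2 + (s 0 + s 1) / 2 + TT s c / 2 - 1))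
      = ?k * (z * b - wt l m b b * (b / 2 + (s 0 + s 1) / 2 + TT s c / 2 - 1))
        + (5 - ?k) * (z * a - wt l m b a * (a / 2 + (s 0 + s 1) / 2 + TT s c / 2 - 1))"
    using count_sum[OF assms(1), of "\<lambda>x. z * x - wt l m b x * (x / 2 + (s 0 + s 1) / 2 + TT s c / 2 - 1)"] by simp
  then show ?thesis
    unfolding cl_def cv_def Let_def by (simp add: T wa wb)
qed

lemma card5_cases:
  fixes P :: "nat \<Rightarrow> bool"
  shows "real (card {j. j<5 \<and> P j}) = 0 \<or> real (card {j. j<5 \<and> P j}) = 1 \<or> real (card {j. j<5 \<and> P j}) = 2 \<or>
   real (card {j. j<5 \<and> P j}) = 3 \<or> real (card {j. j<5 \<and> P j}) = 4 \<or> real (card {j. j<5 \<and> P j}) = 5"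
proof -
  have "card {j. j<5 \<and> P j} \<le> card {..<5::nat}"
    by (rule card_mono) auto
  then have "card {j. j<5 \<and> P j} \<le> 5" by simp
  then have "card {j. j<5 \<and> P j} = 0 \<or> card {j. j<5 \<and> P j} = 1 \<or> card {j. j<5 \<and> P j} = 2 \<or>
     card {j. j<5 \<and> P j} = 3 \<or> card {j. j<5 \<and> P j} = 4 \<or> card {j. j<5 \<and> P j} = 5" by presburger
  then show ?thesis by auto
qed

lemma Fsum_I:
  assumes vals: "\<forall>v<2+5*M. s v = a \<or> s v = b" and ab: "a \<noteq> b" "0 \<le> a" "a \<le> 1/20" "0 \<le> b" "b \<le> 6/7"
  shows "Fsum 1 (1/8) (3/8) b M s \<ge> -2 + real M / 10"
proof -
  have h: "H0 1 (1/8) (3/8) b s \<ge> -2"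
    using vals ab by (intro H0_I[of s a b]) auto
  have s0: "s 0 = a \<or> s 0 = b" and s1: "s 1 = a \<or> s 1 = b" using vals by auto
  have c: "cl 1 (1/8) (3/8) b s c \<ge> 1/10" if "c < M" for c
  proof -
    have v: "\<forall>j<5. s (2+5*c+j) = a \<or> s (2+5*c+j) = b"
      using vals that by auto
    show ?thesis
      unfolding cl_eq_cv[OF v ab(1)]
      by (rule cv_I[OF s0 s1 ab card5_cases])
  qed
  have "(\<Sum>c<M. (1/10::real)) \<le> (\<Sum>c<M. cl 1 (1/8) (3/8) b s c)"
    by (rule sum_mono) (use c in auto)
  then show ?thesis
    unfolding Fsum_decomp using h by simp
qed

lemma Fsum_II:
  assumes vals: "\<forall>v<2+5*M. s v = a \<or> s v = b" and ab: "a \<noteq> b" "0 \<le> a" "a \<le> 1/20" "6/7 \<le> b" "b \<le> 1"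
  shows "Fsum 0 (-3) 1 b M s \<ge> 1/8"
proof -
  have h: "H0 0 (-3) 1 b s \<ge> 1/8"
    using vals ab by (intro H0_II[of s a b]) auto
  have s0: "s 0 = a \<or> s 0 = b" and s1: "s 1 = a \<or> s 1 = b" using vals by auto
  have c: "cl 0 (-3) 1 b s c \<ge> 0" if "c < M" for c
  proof -
    have v: "\<forall>j<5. s (2+5*c+j) = a \<or> s (2+5*c+j) = b"
      using vals that by auto
    show ?thesis
      unfolding cl_eq_cv[OF v ab(1)]
      by (rule cv_II[OF s0 s1 ab card5_cases])
  qed
  have "0 \<le> (\<Sum>c<M. cl 0 (-3) 1 b s c)"
    by (rule sum_nonneg) (use c in auto)
  then show ?thesis
    unfolding Fsum_decomp using h by simp
qed

lemma finite_joint: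
  assumes "signaling_scheme n Sig \<phi>"
  shows "finite (set_pmf (joint n \<phi>))"
    and "x \<in> set_pmf (joint n \<phi>) \<Longrightarrow> fst x permutes {..<n} \<and> snd x \<in> PiE {..<n} (\<lambda>_. Sig)"
proof -
  have fp: "finite (profiles n)" unfolding profiles_def by (rule finite_permutations) simp
  have np: "profiles n \<noteq> {}" unfolding profiles_def using permutes_id by blast
  have fS: "finite Sig" using assms by (simp add: signaling_scheme_def)
  have sub: "set_pmf (joint n \<phi>) \<subseteq> profiles n \<times> PiE {..<n} (\<lambda>_. Sig)"
    using assms fp np unfolding joint_def signaling_scheme_def by auto
  show "finite (set_pmf (joint n \<phi>))"
    by (rule finite_subset[OF sub]) (use fp fS in \<open>auto intro: finite_PiE\<close>)
  show "x \<in> set_pmf (joint n \<phi>) \<Longrightarrow> fst x permutes {..<n} \<and> snd x \<in> PiE {..<n} (\<lambda>_. Sig)"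
  proof -
    assume "x \<in> set_pmf (joint n \<phi>)"
    then have "x \<in> profiles n \<times> PiE {..<n} (\<lambda>_. Sig)" by (rule subsetD[OF sub])
    then show ?thesis by (simp only: mem_Times_iff profiles_def mem_Collect_eq)
  qed
qed

lemma E_sum:
  assumes "finite (set_pmf J)"
  shows "measure_pmf.expectation J f = (\<Sum>x\<in>set_pmf J. f x * pmf J x)"
  by (rule integral_measure_pmf_real) (use assms in auto)

lemma P_sum:
  assumes "finite (set_pmf J)"
  shows "measure_pmf.prob J A = (\<Sum>x\<in>set_pmf J. indicator A x * pmf J x)"
proof -
  have "measure_pmf.prob J A = measure_pmf.expectation J (indicator A)" by simp
  also have "\<dots> = (\<Sum>x\<in>set_pmf J. indicator A x * pmf J x)" by (rule E_sum[OF assms])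
  finally show ?thesis .
qed

lemma least_max:
  fixes B :: real
  shows "(LEAST x. 0 \<le> x \<and> 1 \<le> x + B) = max 0 (1 - B)"
  by (rule Least_equality) auto

lemma agent_ineq:
  fixes W :: "nat \<Rightarrow> nat \<Rightarrow> real"
  assumes fin: "finite (set_pmf (joint n \<phi>))" and pers: "persuasive n W Sig \<phi>"
    and i: "i < n" and th: "th \<in> Sig" "0 \<le> th"
  defines "Y \<equiv> (\<Sum>x\<in>set_pmf (joint n \<phi>). indicator (sig_event i th) x *
              (snd x (fst x i) + (\<Sum>v'\<in>{..<n}-{fst x i}. W (fst x i) v' * snd x v') - 1) * pmf (joint n \<phi>) x)"
  shows "Y \<ge> 0 \<and> (th > 0 \<longrightarrow> Y = 0)"
proof -
  let ?J = "joint n \<phi>"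
  let ?S = "set_pmf ?J"
  let ?A = "sig_event i th"
  let ?\<pi> = "pmf ?J"
  define X where "X x = (\<Sum>v'\<in>{..<n}-{fst x i}. W (fst x i) v' * snd x v')" for x
  define p where "p = (\<Sum>x\<in>?S. indicator ?A x * ?\<pi> x)"
  define R where "R = (\<Sum>x\<in>?S. indicator ?A x * X x * ?\<pi> x)"
  have p_nn: "p \<ge> 0" unfolding p_def by (intro sum_nonneg) (auto simp: pmf_nonneg)
  have Yeq: "Y = (th - 1) * p + R"
  proof -
    have "Y = (\<Sum>x\<in>?S. (th - 1) * (indicator ?A x * ?\<pi> x) + indicator ?A x * X x * ?\<pi> x)"
      unfolding Y_def X_def
      by (intro sum.cong refl) (auto simp: sig_event_def indicator_def algebra_simps split: prod.splits)
    also have "\<dots> = (th - 1) * p + R"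
      unfolding p_def R_def by (simp add: sum.distrib sum_distrib_left)
    finally show ?thesis .
  qed
  show ?thesis
  proof (cases "p = 0")
    case True
    have z: "indicator ?A x * ?\<pi> x = 0" if "x \<in> ?S" for x
      using True that unfolding p_def
      by (subst (asm) sum_nonneg_eq_0_iff) (auto simp: fin pmf_nonneg)
    have "R = 0" unfolding R_def
      by (intro sum.neutral ballI) (metis (no_types, lifting) mult.commute mult_zero_left z mult.assoc)
    then show ?thesis using Yeq True by simp
  next
    case False
    then have pp: "p > 0" using p_nn by simp
    have prob: "measure_pmf.prob ?J ?A = p" unfolding p_def by (rule P_sum[OF fin])
    have Q: "Q n W \<phi> i th x = x + R / p" for x
    proof -
      have "measure_pmf.expectation ?J (\<lambda>(t, s). indicator ?A (t, s) * (x + (\<Sum>v'\<in>{..<n} - {t i}. W (t i) v' * s v')))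
          = (\<Sum>z\<in>?S. (\<lambda>(t, s). indicator ?A (t, s) * (x + (\<Sum>v'\<in>{..<n} - {t i}. W (t i) v' * s v'))) z * ?\<pi> z)"
        by (rule E_sum[OF fin])
      also have "\<dots> = (\<Sum>z\<in>?S. x * (indicator ?A z * ?\<pi> z) + indicator ?A z * X z * ?\<pi> z)"
        unfolding X_def by (intro sum.cong refl) (auto simp: algebra_simps split: prod.splits)
      also have "\<dots> = x * p + R"
        unfolding p_def R_def by (simp add: sum.distrib sum_distrib_left)
      finally show ?thesis
        unfolding Q_def prob using pp by (simp add: field_simps)
    qed
    have "th = (LEAST x. x \<ge> 0 \<and> Q n W \<phi> i th x \<ge> 1)"
      using pers i th(1) pp prob unfolding persuasive_def by auto
    also have "\<dots> = max 0 (1 - R / p)"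
      unfolding Q using least_max[of "R / p"] by simp
    finally have thmax: "th = max 0 (1 - R / p)" .
    have "p * (th + R / p - 1) = p * th + R - p" using pp by (simp add: field_simps)
    then have "Y = p * (th + R / p - 1)" using Yeq by (simp add: algebra_simps)
    moreover have "th + R / p - 1 \<ge> 0" using thmax by linarith
    moreover have "th > 0 \<Longrightarrow> th + R / p - 1 = 0" using thmax by linarith
    ultimately show ?thesis using pp by simp
  qed
qed

lemma class_sum:
  fixes W :: "nat \<Rightarrow> nat \<Rightarrow> real"
  assumes sch: "signaling_scheme n Sig \<phi>" and pers: "persuasive n W Sig \<phi>"
    and th: "th \<in> Sig" "0 \<le> th"
  defines "Z \<equiv> (\<Sum>x\<in>set_pmf (joint n \<phi>). (\<Sum>v<n. (if snd x v = th then 1 else 0) *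
              (snd x v + (\<Sum>v'\<in>{..<n}-{v}. W v v' * snd x v') - 1)) * pmf (joint n \<phi>) x)"
  shows "Z \<ge> 0 \<and> (th > 0 \<longrightarrow> Z = 0)"
proof -
  let ?J = "joint n \<phi>"
  let ?S = "set_pmf ?J"
  note fin = finite_joint(1)[OF sch]
  define Yi where "Yi i = (\<Sum>x\<in>?S. indicator (sig_event i th) x *
              (snd x (fst x i) + (\<Sum>v'\<in>{..<n}-{fst x i}. W (fst x i) v' * snd x v') - 1) * pmf ?J x)" for i
  have pt: "(\<Sum>v<n. (if snd x v = th then 1 else 0) * (snd x v + (\<Sum>v'\<in>{..<n}-{v}. W v v' * snd x v') - 1))
      = (\<Sum>i<n. indicator (sig_event i th) x * (snd x (fst x i) + (\<Sum>v'\<in>{..<n}-{fst x i}. W (fst x i) v' * snd x v') - 1))"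
    if "x \<in> ?S" for x
  proof -
    have bij: "bij_betw (fst x) {..<n} {..<n}"
      using finite_joint(2)[OF sch that] by (simp add: permutes_imp_bij)
    have "(\<Sum>i<n. indicator (sig_event i th) x * (snd x (fst x i) + (\<Sum>v'\<in>{..<n}-{fst x i}. W (fst x i) v' * snd x v') - 1))
       = (\<Sum>i<n. (\<lambda>v. (if snd x v = th then 1 else 0) * (snd x v + (\<Sum>v'\<in>{..<n}-{v}. W v v' * snd x v') - 1)) (fst x i))"
      by (intro sum.cong refl) (auto simp: sig_event_def indicator_def split: prod.splits)
    also have "\<dots> = (\<Sum>v<n. (if snd x v = th then 1 else 0) * (snd x v + (\<Sum>v'\<in>{..<n}-{v}. W v v' * snd x v') - 1))"
      by (rule sum.reindex_bij_betw[OF bij])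
    finally show ?thesis by simp
  qed
  have "Z = (\<Sum>x\<in>?S. \<Sum>i<n. indicator (sig_event i th) x *
              (snd x (fst x i) + (\<Sum>v'\<in>{..<n}-{fst x i}. W (fst x i) v' * snd x v') - 1) * pmf ?J x)"
    unfolding Z_def
  proof (rule sum.cong[OF refl])
    fix x assume x: "x \<in> ?S"
    show "(\<Sum>v<n. (if snd x v = th then 1 else 0) * (snd x v + (\<Sum>v'\<in>{..<n}-{v}. W v v' * snd x v') - 1)) * pmf ?J x
      = (\<Sum>i<n. indicator (sig_event i th) x *
              (snd x (fst x i) + (\<Sum>v'\<in>{..<n}-{fst x i}. W (fst x i) v' * snd x v') - 1) * pmf ?J x)"
      unfolding pt[OF x] by (rule sum_distrib_right)
  qed
  also have "\<dots> = (\<Sum>i<n. Yi i)"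
    unfolding Yi_def by (rule sum.swap)
  finally have Zs: "Z = (\<Sum>i<n. Yi i)" .
  have Yi: "Yi i \<ge> 0 \<and> (th > 0 \<longrightarrow> Yi i = 0)" if "i < n" for i
    unfolding Yi_def by (rule agent_ineq[OF fin pers that th])
  show ?thesis
    unfolding Zs using Yi by (auto intro: sum_nonneg)
qed

lemma wsum_ge:
  fixes f :: "'a \<Rightarrow> real"
  assumes "finite (set_pmf J)" "\<And>x. x \<in> set_pmf J \<Longrightarrow> f x \<ge> c"
  shows "(\<Sum>x\<in>set_pmf J. f x * pmf J x) \<ge> c"
proof -
  have "(\<Sum>x\<in>set_pmf J. c * pmf J x) \<le> (\<Sum>x\<in>set_pmf J. f x * pmf J x)"
    by (intro sum_mono mult_right_mono) (auto simp: assms pmf_nonneg)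
  moreover have "(\<Sum>x\<in>set_pmf J. c * pmf J x) = c"
    using sum_pmf_eq_1[OF assms(1) order_refl] by (simp add: sum_distrib_left[symmetric])
  ultimately show ?thesis by simp
qed

lemma Fsum_split:
  assumes vals: "\<forall>v<2+5*M. s v = a \<or> s v = b" and ab: "a \<noteq> b"
  shows "Fsum z l m b M s = z * (\<Sum>v<2+5*M. s v)
     - l * (\<Sum>v<2+5*M. (if s v = b then 1 else 0) * (s v + (\<Sum>v'\<in>{..<2+5*M}-{v}. Wg v v' * s v') - 1))
     - m * (\<Sum>v<2+5*M. (if s v = a then 1 else 0) * (s v + (\<Sum>v'\<in>{..<2+5*M}-{v}. Wg v v' * s v') - 1))"
proof -
  have eq: "Fsum z l m b M s = (\<Sum>v<2+5*M. z * s v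
     - l * ((if s v = b then 1 else 0) * (s v + (\<Sum>v'\<in>{..<2+5*M}-{v}. Wg v v' * s v') - 1))
     - m * ((if s v = a then 1 else 0) * (s v + (\<Sum>v'\<in>{..<2+5*M}-{v}. Wg v v' * s v') - 1)))"
    unfolding Fsum_def gg_def
  proof (rule sum.cong[OF refl])
    fix v assume "v \<in> {..<2+5*M}"
    then have "s v = a \<or> s v = b" using vals by auto
    then show "z * s v - wt l m b (s v) * (s v + (\<Sum>u\<in>{..<2+5*M}-{v}. Wg v u * s u) - 1) =
      z * s v - l * ((if s v = b then 1 else 0) * (s v + (\<Sum>v'\<in>{..<2+5*M}-{v}. Wg v v' * s v') - 1))
     - m * ((if s v = a then 1 else 0) * (s v + (\<Sum>v'\<in>{..<2+5*M}-{v}. Wg v v' * s v') - 1))"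
      using ab by (auto simp: wt_def)
  qed
  show ?thesis
    unfolding eq by (simp only: sum_subtractf sum_distrib_left)
qed

lemma lower_bound:
  assumes sch: "signaling_scheme (2+5*M) Sig \<phi>" and bin: "binary Sig"
    and pers: "persuasive (2+5*M) Wg Sig \<phi>" and M: "50 \<le> M"
  shows "cost (2+5*M) \<phi> \<ge> 1/100 * real (2+5*M)"
proof -
  obtain x y where xy: "Sig = {x, y}" "x \<noteq> y"
    using bin unfolding binary_def by (auto simp: card_2_iff)
  define a where "a = min x y"
  define b where "b = max x y"
  have Sab: "Sig = {a, b}" and ab: "a < b"
    using xy unfolding a_def b_def by (auto simp: min_def max_def)
  have sub01: "Sig \<subseteq> {0..1}" using sch by (simp add: signaling_scheme_def)
  have a0: "0 \<le> a" and b1: "b \<le> 1" using sub01 Sab by auto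
  have b0: "0 < b" using a0 ab by simp
  let ?n = "2+5*M"
  let ?J = "joint ?n \<phi>"
  let ?S = "set_pmf ?J"
  let ?\<pi> = "pmf ?J"
  note fin = finite_joint(1)[OF sch]
  have vals: "\<forall>v<?n. snd z v = a \<or> snd z v = b" if "z \<in> ?S" for z
  proof -
    have "snd z \<in> PiE {..<?n} (\<lambda>_. Sig)" using finite_joint(2)[OF sch that] by simp
    then show ?thesis using Sab by (auto simp: PiE_iff)
  qed
  have nonneg: "\<forall>v<?n. snd z v \<ge> 0" if "z \<in> ?S" for z
    using vals[OF that] a0 b0 by auto
  define Sm where "Sm z = (\<Sum>v<?n. snd z v)" for z :: "(nat \<Rightarrow> nat) \<times> (nat \<Rightarrow> real)"
  define G where "G th z = (\<Sum>v<?n. (if snd z v = th then 1 else 0) *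
              (snd z v + (\<Sum>v'\<in>{..<?n}-{v}. Wg v v' * snd z v') - 1))" for th and z :: "(nat \<Rightarrow> nat) \<times> (nat \<Rightarrow> real)"
  have cost_eq: "cost ?n \<phi> = (\<Sum>z\<in>?S. Sm z * ?\<pi> z)"
  proof -
    have "cost ?n \<phi> = (\<Sum>z\<in>?S. (\<lambda>(t, s). \<Sum>v<?n. \<bar>s v\<bar>) z * ?\<pi> z)"
      unfolding cost_def by (rule E_sum[OF fin])
    also have "\<dots> = (\<Sum>z\<in>?S. Sm z * ?\<pi> z)"
    proof (rule sum.cong[OF refl])
      fix z assume z: "z \<in> ?S"
      have "(\<lambda>(t, s). \<Sum>v<?n. \<bar>s v\<bar>) z = (\<Sum>v<?n. \<bar>snd z v\<bar>)" by (simp add: case_prod_beta)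
      also have "\<dots> = Sm z" unfolding Sm_def using nonneg[OF z] by (intro sum.cong refl) auto
      finally show "(\<lambda>(t, s). \<Sum>v<?n. \<bar>s v\<bar>) z * ?\<pi> z = Sm z * ?\<pi> z" by simp
    qed
    finally show ?thesis .
  qed
  have EGa: "(\<Sum>z\<in>?S. G a z * ?\<pi> z) \<ge> 0"
    using class_sum[OF sch pers _ a0] Sab unfolding G_def by auto
  have EGb: "(\<Sum>z\<in>?S. G b z * ?\<pi> z) = 0"
    using class_sum[OF sch pers _ less_imp_le[OF b0]] Sab b0 unfolding G_def by auto
  have EF: "(\<Sum>z\<in>?S. Fsum zz l m b M (snd z) * ?\<pi> z) =
      zz * (\<Sum>z\<in>?S. Sm z * ?\<pi> z) - l * (\<Sum>z\<in>?S. G b z * ?\<pi> z) - m * (\<Sum>z\<in>?S. G a z * ?\<pi> z)" for zz l m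
  proof -
    have "(\<Sum>z\<in>?S. Fsum zz l m b M (snd z) * ?\<pi> z) =
        (\<Sum>z\<in>?S. zz * (Sm z * ?\<pi> z) - l * (G b z * ?\<pi> z) - m * (G a z * ?\<pi> z))"
    proof (rule sum.cong[OF refl])
      fix z assume z: "z \<in> ?S"
      have feq: "Fsum zz l m b M (snd z) = zz * Sm z - l * G b z - m * G a z"
        unfolding Sm_def G_def by (rule Fsum_split[OF vals[OF z]]) (use ab in simp)
      show "Fsum zz l m b M (snd z) * ?\<pi> z = zz * (Sm z * ?\<pi> z) - l * (G b z * ?\<pi> z) - m * (G a z * ?\<pi> z)"
        unfolding feq by (simp add: algebra_simps)
    qed
    also have "\<dots> = zz * (\<Sum>z\<in>?S. Sm z * ?\<pi> z) - l * (\<Sum>z\<in>?S. G b z * ?\<pi> z) - m * (\<Sum>z\<in>?S. G a z * ?\<pi> z)"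
      by (simp only: sum_subtractf sum_distrib_left)
    finally show ?thesis .
  qed
  show ?thesis
  proof (cases "a \<ge> 1/20")
    case True
    have h1: "(\<Sum>z\<in>?S. Sm z * ?\<pi> z) \<ge> real ?n * a"
    proof (rule wsum_ge[OF fin])
      fix z assume z: "z \<in> ?S"
      have "(\<Sum>v<?n. a) \<le> Sm z" unfolding Sm_def
        by (rule sum_mono) (use vals[OF z] ab in auto)
      then show "real ?n * a \<le> Sm z" by simp
    qed
    have h2: "real ?n * a \<ge> real ?n * (1/20)" using True by (intro mult_left_mono) auto
    have h3: "real ?n * (1/20) \<ge> 1/100 * real ?n" by simp
    show ?thesis unfolding cost_eq using h1 h2 h3 by linarith
  next
    case False
    show ?thesis
    proof (cases "b \<le> 6/7")
      case True
      have "(\<Sum>z\<in>?S. Fsum 1 (1/8) (3/8) b M (snd z) * ?\<pi> z) \<ge> -2 + real M / 10"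
      proof (rule wsum_ge[OF fin])
        fix z assume z: "z \<in> ?S"
        show "-2 + real M / 10 \<le> Fsum 1 (1/8) (3/8) b M (snd z)"
          by (rule Fsum_I[OF vals[OF z]]) (use False True ab a0 in auto)
      qed
      then have "-2 + real M / 10 \<le> (\<Sum>z\<in>?S. Sm z * ?\<pi> z) - 3/8 * (\<Sum>z\<in>?S. G a z * ?\<pi> z)"
        unfolding EF EGb by simp
      then have "-2 + real M / 10 \<le> cost ?n \<phi>" using EGa unfolding cost_eq by linarith
      moreover have "1/100 * real ?n \<le> -2 + real M / 10" using M by simp
      ultimately show ?thesis by linarith
    next
      case False2: False
      have "(\<Sum>z\<in>?S. Fsum 0 (-3) 1 b M (snd z) * ?\<pi> z) \<ge> 1/8"
      proof (rule wsum_ge[OF fin])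
        fix z assume z: "z \<in> ?S"
        show "1/8 \<le> Fsum 0 (-3) 1 b M (snd z)"
          by (rule Fsum_II[OF vals[OF z]]) (use False False2 ab a0 b1 in auto)
      qed
      then have False unfolding EF EGb using EGa by simp
      then show ?thesis ..
    qed
  qed
qed

lemma wg_graph: "weighted_graph n Wg"
  unfolding weighted_graph_def Wg_def by auto

lemma wg_half: "half_edge_weights n Wg"
  unfolding half_edge_weights_def Wg_def by auto

lemma wg_opt: "OPT_IR (2+5*M) Wg \<le> 2"
proof -
  define \<theta> where "\<theta> v = (if v < 2 then 1 else 0::real)" for v :: nat
  let ?X = "{(\<Sum>v<2+5*M. \<theta> v) | \<theta>. (\<forall>v<2+5*M. \<theta> v \<in> {0..1}) \<and> feasible (2+5*M) Wg \<theta>}"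
  have s2: "(\<Sum>v<2+5*M. \<theta> v) = 2"
    unfolding sum_split5 by (simp add: \<theta>_def)
  have rows: "(\<Sum>v<2+5*M. Wg u v * \<theta> v) = Wg u 0 + Wg u 1" for u
    unfolding sum_split5 by (simp add: \<theta>_def)
  have feas: "feasible (2+5*M) Wg \<theta>"
    unfolding feasible_def
  proof (intro conjI allI impI)
    fix v show "0 \<le> \<theta> v" by (simp add: \<theta>_def)
  next
    fix u assume "u < 2+5*M"
    show "1 \<le> (\<Sum>v<2+5*M. Wg u v * \<theta> v)"
      unfolding rows by (auto simp: Wg_def)
  qed
  have mem: "2 \<in> ?X"
    using feas s2 by (auto simp: \<theta>_def intro!: exI[of _ \<theta>])
  have bdd: "bdd_below ?X"
  proof (rule bdd_belowI[of _ 0])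
    fix x assume "x \<in> ?X"
    then obtain \<theta>' where xe: "x = (\<Sum>v<2+5*M. \<theta>' v)" and th01: "\<forall>v<2+5*M. \<theta>' v \<in> {0..1}" by blast
    have nn: "\<And>v. v \<in> {..<2+5*M} \<Longrightarrow> 0 \<le> \<theta>' v" using th01 by auto
    have "0 \<le> (\<Sum>v<2+5*M. \<theta>' v)" by (rule sum_nonneg) (rule nn)
    then show "0 \<le> x" by (simp only: xe)
  qed
  show ?thesis
    unfolding OPT_IR_def by (rule cInf_lower[OF mem bdd])
qed

theorem theorem8p1:
  shows "\<exists>c::real. c > 0 \<and> (\<exists>C::real. \<forall>N::nat. \<exists>n\<ge>N. \<exists>W.
           weighted_graph n W \<and> half_edge_weights n W \<and> OPT_IR n W \<le> C \<and>
           (\<forall>Sig \<phi>. signaling_scheme n Sig \<phi> \<longrightarrow> binary Sig \<longrightarrow> persuasive n W Sig \<phi>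
                \<longrightarrow> cost n \<phi> \<ge> c * real n))"
proof -
  have main: "\<forall>N::nat. \<exists>n\<ge>N. \<exists>W. weighted_graph n W \<and> half_edge_weights n W \<and> OPT_IR n W \<le> 2 \<and>
           (\<forall>Sig \<phi>. signaling_scheme n Sig \<phi> \<longrightarrow> binary Sig \<longrightarrow> persuasive n W Sig \<phi>
                \<longrightarrow> cost n \<phi> \<ge> 1/100 * real n)"
  proof (rule allI)
    fix N :: nat
    have "N \<le> 2+5*(N+50)" by simp
    moreover have "weighted_graph (2+5*(N+50)) Wg \<and> half_edge_weights (2+5*(N+50)) Wg \<and> OPT_IR (2+5*(N+50)) Wg \<le> 2 \<and>
           (\<forall>Sig \<phi>. signaling_scheme (2+5*(N+50)) Sig \<phi> \<longrightarrow> binary Sig \<longrightarrow> persuasive (2+5*(N+50)) Wg Sig \<phi>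
                \<longrightarrow> cost (2+5*(N+50)) \<phi> \<ge> 1/100 * real (2+5*(N+50)))"
    proof (intro conjI allI impI)
      show "weighted_graph (2+5*(N+50)) Wg" by (rule wg_graph)
      show "half_edge_weights (2+5*(N+50)) Wg" by (rule wg_half)
      show "OPT_IR (2+5*(N+50)) Wg \<le> 2" by (rule wg_opt)
      fix Sig \<phi>
      assume "signaling_scheme (2+5*(N+50)) Sig \<phi>" "binary Sig" "persuasive (2+5*(N+50)) Wg Sig \<phi>"
      then show "cost (2+5*(N+50)) \<phi> \<ge> 1/100 * real (2+5*(N+50))"
        by (rule lower_bound) simp
    qed
    ultimately show "\<exists>n\<ge>N. \<exists>W. weighted_graph n W \<and> half_edge_weights n W \<and> OPT_IR n W \<le> 2 \<and>
           (\<forall>Sig \<phi>. signaling_scheme n Sig \<phi> \<longrightarrow> binary Sig \<longrightarrow> persuasive n W Sig \<phi>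
                \<longrightarrow> cost n \<phi> \<ge> 1/100 * real n)" by blast
  qed
  show ?thesis
    apply (rule exI[of _ "1/100::real"])
    apply (rule conjI)
     apply simp
    apply (rule exI[of _ "2::real"])
    apply (rule main)
    done
qed

end
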